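(* Consider the dynamic trial-offer market with social influence under the quality ranking with $n=2$ products, visibilities $v_1\ge v_2>0$, initial appeals $A_1,A_2>0$ and qualities $1\ge q_1>q_2\ge 0$. Then almost surely $\frac{d_{1,t}}{d_{1,t}+d_{2,t}}\to 1$ as $t\to\infty$, i.e. the market converges almost surely to a monopoly for product 1.
   Context: Dynamic trial-offer market with social influence under the quality ranking: products $1,\dots,n$ with initial appeals $A_i>0$, qualities $q_i\in[0,1]$, and product $i$ permanently displayed in position $i$ with visibility $v_i>0$. Let $d_{i,t}$ be the number of purchases of product $i$ before step $t$ ($d_{i,1}=0$) and $a_{i,t}=A_i+d_{i,t}$. At step $t$ one participant tries product $i$ with probability $\frac{v_i a_{i,t}}{\sum_j v_j a_{j,t}}$, then purchases it with probability $q_i$ (independently); if purchased, $d_{i,t+1}=d_{i,t}+1$, all other counts unchanged. The market share of product $i$ at step $t$ is $d_{i,t}/\sum_j d_{j,t}$ (defined once some purchase has occurred). *)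

theory Defs
  imports "HOL-Probability.Probability"
begin

text \<open>Two-product trial-offer market under the quality ranking (product i in position i).
  The randomness of step t is given by a pair (u,w) of independent uniform [0,1] variables:
  product 1 is tried iff u < v1 a1 / (v1 a1 + v2 a2), otherwise product 2 is tried;
  the tried product i is purchased iff w < q_i.\<close>

definition market_noise :: "(real \<times> real) measure" where
  "market_noise = uniform_measure lborel {0..1} \<Otimes>\<^sub>M uniform_measure lborel {0..1}"

fun market_step ::
  "real \<Rightarrow> real \<Rightarrow> real \<Rightarrow> real \<Rightarrow> real \<Rightarrow> real \<Rightarrow> nat \<times> nat \<Rightarrow> real \<times> real \<Rightarrow> nat \<times> nat" where
  "market_step v1 v2 A1 A2 q1 q2 (d1, d2) (u, w) =
     (let a1 = A1 + real d1; a2 = A2 + real d2 in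
      if u < v1 * a1 / (v1 * a1 + v2 * a2)
      then (if w < q1 then (Suc d1, d2) else (d1, d2))
      else (if w < q2 then (d1, Suc d2) else (d1, d2)))"

text \<open>purchase counts (d_1, d_2) after t steps, i.e. (d_{1,t+1}, d_{2,t+1}) in the paper's indexing.\<close>
fun market_counts ::
  "real \<Rightarrow> real \<Rightarrow> real \<Rightarrow> real \<Rightarrow> real \<Rightarrow> real \<Rightarrow> (real \<times> real) stream \<Rightarrow> nat \<Rightarrow> nat \<times> nat" where
  "market_counts v1 v2 A1 A2 q1 q2 \<omega> 0 = (0, 0)"
| "market_counts v1 v2 A1 A2 q1 q2 \<omega> (Suc t) =
     market_step v1 v2 A1 A2 q1 q2 (market_counts v1 v2 A1 A2 q1 q2 \<omega> t) (\<omega> !! t)"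

end

theory Submission
  imports Defs
begin

definition U :: "real measure" where "U = uniform_measure lborel {0..1}"

lemma U_prob: "prob_space U"
  unfolding U_def by (rule prob_space_uniform_measure) auto

interpretation UU: pair_prob_space U U
  by (simp add: U_prob pair_prob_space_def pair_sigma_finite_def prob_space_imp_sigma_finite)

lemma noise_eq: "market_noise = U \<Otimes>\<^sub>M U"
  unfolding market_noise_def U_def ..

interpretation N: prob_space market_noise
  unfolding noise_eq by (rule UU.P.prob_space_axioms)

lemma sets_U[measurable_cong]: "sets U = sets borel"
  unfolding U_def by simp

lemma U_lt: assumes "0 \<le> p" "p \<le> 1" shows "emeasure U {..<p} = ennreal p"
proof -
  have "{0..1} \<inter> {..<p} = {0..<p}" using assms by auto
  then show ?thesis unfolding U_def using assms by (simp add: divide_ennreal_def)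
qed

lemma U_ge: assumes "0 \<le> p" "p \<le> 1" shows "emeasure U {p..} = ennreal (1 - p)"
proof -
  have "{0..1} \<inter> {p..} = {p..1}" using assms by auto
  then show ?thesis unfolding U_def using assms by (simp add: divide_ennreal_def)
qed

lemma noise_rect: "A \<in> sets borel \<Longrightarrow> B \<in> sets borel \<Longrightarrow>
   emeasure market_noise (A \<times> B) = emeasure U A * emeasure U B"
  unfolding noise_eq by (rule UU.M1.emeasure_pair_measure_Times) (auto simp: sets_U)

lemma space_noise: "space market_noise = UNIV"
  unfolding noise_eq U_def by (simp add: space_pair_measure)

locale mkt =
  fixes v1 v2 A1 A2 q1 q2 :: real
  assumes v: "v2 \<le> v1" "0 < v2" and Apos: "0 < A1" "0 < A2" and q: "q1 \<le> 1" "q2 < q1" "0 \<le> q2"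
begin

abbreviation "stp \<equiv> market_step v1 v2 A1 A2 q1 q2"

definition pr :: "nat \<Rightarrow> nat \<Rightarrow> real" where
  "pr d1 d2 = v1 * (A1 + real d1) / (v1 * (A1 + real d1) + v2 * (A2 + real d2))"

lemma pr_bounds: "0 < pr d1 d2" "pr d1 d2 < 1"
  using v Apos by (auto simp: pr_def divide_less_eq add_pos_pos)

lemma stp_eq: "stp (d1, d2) x = (if fst x < pr d1 d2 then (if snd x < q1 then (Suc d1, d2) else (d1, d2))
     else (if snd x < q2 then (d1, Suc d2) else (d1, d2)))"
  by (cases x) (simp add: pr_def Let_def)

lemma stp_meas[measurable]: "stp s \<in> measurable market_noise (count_space UNIV)"
proof -
  obtain d1 d2 where s: "s = (d1, d2)" by (cases s)
  show ?thesis unfolding s stp_eq[abs_def] noise_eq by measurable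
qed

lemma noise_sets: assumes [measurable]: "Measurable.pred market_noise P" shows "{x. P x} \<in> sets market_noise"
proof -
  have "{x\<in>space market_noise. P x} \<in> sets market_noise" by measurable
  then show ?thesis by (simp add: space_noise)
qed

fun cnt :: "nat \<times> nat \<Rightarrow> (real \<times> real) stream \<Rightarrow> nat \<Rightarrow> nat \<times> nat" where
  "cnt s \<omega> 0 = s"
| "cnt s \<omega> (Suc t) = stp (cnt s \<omega> t) (\<omega> !! t)"

lemma cnt_shift: "cnt s (x ## \<omega>) (Suc t) = cnt (stp s x) \<omega> t"
  by (induction t) auto

lemma cnt_market: "market_counts v1 v2 A1 A2 q1 q2 \<omega> t = cnt (0,0) \<omega> t"
  by (induction t) auto

lemma cnt_meas[measurable]: "(\<lambda>\<omega>. cnt s \<omega> t) \<in> measurable (stream_space market_noise) (count_space UNIV)"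
proof (induction t)
  case 0 then show ?case by simp
next
  case (Suc t)
  have "(\<lambda>\<omega>. stp (cnt s \<omega> t) (\<omega> !! t)) \<in> measurable (stream_space market_noise) (count_space UNIV)"
    by (rule measurable_compose_countable[OF _ Suc]) (rule measurable_compose[OF measurable_snth stp_meas])
  then show ?case by simp
qed

definition P1 where "P1 d1 d2 = pr d1 d2 * q1"
definition P2 where "P2 d1 d2 = (1 - pr d1 d2) * q2"

lemma E1_meas: "emeasure market_noise {x. fst x < pr d1 d2 \<and> snd x < q1} = ennreal (P1 d1 d2)"
proof -
  have "{x. fst x < pr d1 d2 \<and> snd x < q1} = {..<pr d1 d2} \<times> {..<q1}" by auto
  then show ?thesis using pr_bounds[of d1 d2] q
    by (simp add: noise_rect U_lt P1_def ennreal_mult)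
qed

lemma E2_meas: "emeasure market_noise {x. \<not> fst x < pr d1 d2 \<and> snd x < q2} = ennreal (P2 d1 d2)"
proof -
  have "{x. \<not> fst x < pr d1 d2 \<and> snd x < q2} = {pr d1 d2..} \<times> {..<q2}" by auto
  then show ?thesis using pr_bounds[of d1 d2] q
    by (simp add: noise_rect U_lt U_ge P2_def ennreal_mult)
qed

lemma P_bounds: "0 < P1 d1 d2" "0 \<le> P2 d1 d2" "P1 d1 d2 + P2 d1 d2 \<le> 1"
proof -
  have a: "0 < pr d1 d2" "pr d1 d2 < 1" by (rule pr_bounds)+
  show "0 < P1 d1 d2" using a q unfolding P1_def by simp
  show "0 \<le> P2 d1 d2" using a q unfolding P2_def by simp
  have "pr d1 d2 * q1 + (1 - pr d1 d2) * q2 \<le> pr d1 d2 * 1 + (1 - pr d1 d2) * 1"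
    using a q by (intro add_mono mult_left_mono) auto
  then show "P1 d1 d2 + P2 d1 d2 \<le> 1" unfolding P1_def P2_def by simp
qed

lemma E0_meas: "emeasure market_noise {x. \<not> (fst x < pr d1 d2 \<and> snd x < q1) \<and> \<not> (\<not> fst x < pr d1 d2 \<and> snd x < q2)}
   = ennreal (1 - P1 d1 d2 - P2 d1 d2)"
proof -
  let ?E1 = "{x. fst x < pr d1 d2 \<and> snd x < q1}" and ?E2 = "{x. \<not> fst x < pr d1 d2 \<and> snd x < q2}"
  have s1: "?E1 \<in> sets market_noise" by (rule noise_sets) (unfold noise_eq, measurable)
  have s2: "?E2 \<in> sets market_noise" by (rule noise_sets) (unfold noise_eq, measurable)
  have eq: "{x. \<not> (fst x < pr d1 d2 \<and> snd x < q1) \<and> \<not> (\<not> fst x < pr d1 d2 \<and> snd x < q2)} = space market_noise - (?E1 \<union> ?E2)"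
    by (auto simp: space_noise)
  have "emeasure market_noise (?E1 \<union> ?E2) = ennreal (P1 d1 d2) + ennreal (P2 d1 d2)"
    by (subst plus_emeasure[symmetric]) (use s1 s2 in \<open>auto simp: E1_meas E2_meas\<close>)
  also have "\<dots> = ennreal (P1 d1 d2 + P2 d1 d2)" using P_bounds[of d1 d2] by (simp add: ennreal_plus)
  finally have u: "emeasure market_noise (?E1 \<union> ?E2) = ennreal (P1 d1 d2 + P2 d1 d2)" .
  have m: "ennreal 1 - ennreal (P1 d1 d2 + P2 d1 d2) = ennreal (1 - (P1 d1 d2 + P2 d1 d2))"
    by (rule ennreal_minus) (use P_bounds[of d1 d2] in simp)
  have "emeasure market_noise (space market_noise - (?E1 \<union> ?E2)) =
     emeasure market_noise (space market_noise) - emeasure market_noise (?E1 \<union> ?E2)"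
    by (rule emeasure_compl) (use s1 s2 in auto)
  also have "\<dots> = ennreal (1 - (P1 d1 d2 + P2 d1 d2))" 
    unfolding u N.emeasure_space_1 using m by simp
  finally show ?thesis unfolding eq by (simp add: diff_diff_eq)
qed

lemma step_integral:
  fixes g :: "nat \<times> nat \<Rightarrow> ennreal"
  shows "(\<integral>\<^sup>+x. g (stp (d1,d2) x) \<partial>market_noise) =
     ennreal (P1 d1 d2) * g (Suc d1, d2) + ennreal (P2 d1 d2) * g (d1, Suc d2)
     + ennreal (1 - P1 d1 d2 - P2 d1 d2) * g (d1, d2)"
proof -
  let ?E1 = "{x. fst x < pr d1 d2 \<and> snd x < q1}" and ?E2 = "{x. \<not> fst x < pr d1 d2 \<and> snd x < q2}"
    and ?E0 = "{x. \<not> (fst x < pr d1 d2 \<and> snd x < q1) \<and> \<not> (\<not> fst x < pr d1 d2 \<and> snd x < q2)}"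
  have s1: "?E1 \<in> sets market_noise" by (rule noise_sets) (unfold noise_eq, measurable)
  have s2: "?E2 \<in> sets market_noise" by (rule noise_sets) (unfold noise_eq, measurable)
  have s0: "?E0 \<in> sets market_noise" by (rule noise_sets) (unfold noise_eq, measurable)
  have pt: "g (stp (d1,d2) x) = g (Suc d1, d2) * indicator ?E1 x + (g (d1, Suc d2) * indicator ?E2 x
            + g (d1, d2) * indicator ?E0 x)" for x
    by (auto simp: stp_eq split: split_indicator)
  have "(\<integral>\<^sup>+x. g (stp (d1,d2) x) \<partial>market_noise) = (\<integral>\<^sup>+x. g (Suc d1, d2) * indicator ?E1 x + (g (d1, Suc d2) * indicator ?E2 x
            + g (d1, d2) * indicator ?E0 x) \<partial>market_noise)"
    by (simp only: pt)
  also have "\<dots> = g (Suc d1, d2) * emeasure market_noise ?E1 + (g (d1, Suc d2) * emeasure market_noise ?E2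
     + g (d1, d2) * emeasure market_noise ?E0)"
    using s1 s2 s0 by (simp add: nn_integral_add nn_integral_cmult_indicator)
  finally show ?thesis by (simp only: E1_meas E2_meas E0_meas mult.commute add.assoc)
qed

end

context mkt begin

abbreviation "S \<equiv> stream_space market_noise"

lemma space_S: "space S = UNIV"
  by (simp add: space_stream_space space_noise streams_UNIV)

lemma pred_cnt: "Measurable.pred S (\<lambda>\<omega>. P (cnt s \<omega> t))"
  using pred_sets2[where A="Collect P", OF _ cnt_meas[of s t]] by simp

lemma sets_hit: "{\<omega>\<in>space S. \<exists>t\<le>n. c \<le> V (cnt s \<omega> t)} \<in> sets S"
  apply (rule predE)
  apply (rule pred_intros_countable)
  apply (rule pred_intros_logic)
   apply simp
  apply (rule pred_cnt)
  done

lemma sets_stay: "{\<omega>\<in>space S. \<forall>t\<le>n. cnt s \<omega> t = s'} \<in> sets S"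
  apply (rule predE)
  apply (rule pred_intros_countable)
  apply (rule pred_intros_logic)
   apply simp
  apply (rule pred_cnt)
  done

end

context mkt begin

interpretation SP: prob_space S by (rule N.prob_space_stream_space)

lemma pred_eq2: "Measurable.pred S (\<lambda>\<omega>. cnt s \<omega> t = cnt s \<omega> T)"
  by (rule measurable_compose_countable[where f="\<lambda>i \<omega>. cnt s \<omega> t = i", OF pred_cnt cnt_meas])

lemma sets_stuck: "{\<omega>\<in>space S. \<forall>t\<ge>T. cnt s \<omega> t = cnt s \<omega> T} \<in> sets S"
  apply (rule predE)
  apply (rule pred_intros_countable)
  apply (rule pred_intros_logic)
   apply simp
  apply (rule pred_eq2)
  done

lemma hit_bound:
  fixes V :: "nat \<times> nat \<Rightarrow> real" and c :: real
  assumes Vnn: "\<And>s. 0 \<le> V s" and c: "0 < c"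
   and super: "\<And>d1 d2. P1 d1 d2 * V (Suc d1, d2) + P2 d1 d2 * V (d1, Suc d2) + (1 - P1 d1 d2 - P2 d1 d2) * V (d1,d2) \<le> V (d1,d2)"
  shows "emeasure S {\<omega>\<in>space S. \<exists>t\<le>n. c \<le> V (cnt s \<omega> t)} \<le> ennreal (V s / c)"
proof (induction n arbitrary: s)
  case 0
  show ?case
  proof (cases "c \<le> V s")
    case True
    then have "1 \<le> V s / c" using c by simp
    then have "(1::ennreal) \<le> ennreal (V s / c)" by (metis ennreal_1 ennreal_leI)
    then show ?thesis by (rule order_trans[OF SP.emeasure_le_1])
  next
    case False
    then show ?thesis by simp
  qed
next
  case (Suc n)
  show ?case
  proof (cases "c \<le> V s")
    case True
    then have "1 \<le> V s / c" using c by simp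
    then have "(1::ennreal) \<le> ennreal (V s / c)" by (metis ennreal_1 ennreal_leI)
    then show ?thesis by (rule order_trans[OF SP.emeasure_le_1])
  next
    case False
    obtain d1 d2 where s: "s = (d1, d2)" by (cases s)
    have eq: "{x \<in> space S. y ## x \<in> {\<omega>\<in>space S. \<exists>t\<le>Suc n. c \<le> V (cnt s \<omega> t)}}
        = {\<omega>\<in>space S. \<exists>t\<le>n. c \<le> V (cnt (stp s y) \<omega> t)}" for y
    proof -
      have "(\<exists>t\<le>Suc n. c \<le> V (cnt s (y ## x) t)) \<longleftrightarrow> (\<exists>t\<le>n. c \<le> V (cnt (stp s y) x t))" for x
      proof
        assume "\<exists>t\<le>Suc n. c \<le> V (cnt s (y ## x) t)"
        then obtain t where t: "t \<le> Suc n" "c \<le> V (cnt s (y ## x) t)" by blast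
        then obtain t' where tt: "t = Suc t'" using False by (cases t) auto
        have "c \<le> V (cnt (stp s y) x t')" using t(2) unfolding tt cnt_shift .
        then show "\<exists>t\<le>n. c \<le> V (cnt (stp s y) x t)" using t(1) tt by auto
      next
        assume "\<exists>t\<le>n. c \<le> V (cnt (stp s y) x t)"
        then obtain t where t: "t \<le> n" "c \<le> V (cnt (stp s y) x t)" by blast
        then show "\<exists>t\<le>Suc n. c \<le> V (cnt s (y ## x) t)"
          by (intro exI[of _ "Suc t"]) (simp only: cnt_shift Suc_le_mono)
      qed
      then show ?thesis by (auto simp: space_S)
    qed
    have "emeasure S {\<omega>\<in>space S. \<exists>t\<le>Suc n. c \<le> V (cnt s \<omega> t)}
       = (\<integral>\<^sup>+y. emeasure S {\<omega>\<in>space S. \<exists>t\<le>n. c \<le> V (cnt (stp s y) \<omega> t)} \<partial>market_noise)"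
      by (subst N.emeasure_stream_space) (simp_all only: sets_hit eq)
    also have "\<dots> \<le> (\<integral>\<^sup>+y. ennreal (V (stp s y) / c) \<partial>market_noise)"
      by (intro nn_integral_mono Suc.IH)
    also have "\<dots> = ennreal (P1 d1 d2) * ennreal (V (Suc d1, d2) / c) + ennreal (P2 d1 d2) * ennreal (V (d1, Suc d2) / c)
     + ennreal (1 - P1 d1 d2 - P2 d1 d2) * ennreal (V (d1, d2) / c)"
      unfolding s by (rule step_integral)
    also have "\<dots> = ennreal ((P1 d1 d2 * V (Suc d1, d2) + P2 d1 d2 * V (d1, Suc d2) + (1 - P1 d1 d2 - P2 d1 d2) * V (d1,d2)) / c)"
    proof -
      have p: "0 \<le> P1 d1 d2" "0 \<le> P2 d1 d2" "0 \<le> 1 - P1 d1 d2 - P2 d1 d2" using P_bounds[of d1 d2] by auto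
      have v: "0 \<le> V (Suc d1, d2) / c" "0 \<le> V (d1, Suc d2) / c" "0 \<le> V (d1, d2) / c" using Vnn c by auto
      let ?a = "P1 d1 d2 * (V (Suc d1, d2) / c)" and ?b = "P2 d1 d2 * (V (d1, Suc d2) / c)"
        and ?e = "(1 - P1 d1 d2 - P2 d1 d2) * (V (d1, d2) / c)"
      have n: "0 \<le> ?a" "0 \<le> ?b" "0 \<le> ?e"
        by (rule mult_nonneg_nonneg[OF p(1) v(1)], rule mult_nonneg_nonneg[OF p(2) v(2)], rule mult_nonneg_nonneg[OF p(3) v(3)])
      have "ennreal (P1 d1 d2) * ennreal (V (Suc d1, d2) / c) + ennreal (P2 d1 d2) * ennreal (V (d1, Suc d2) / c)
         + ennreal (1 - P1 d1 d2 - P2 d1 d2) * ennreal (V (d1, d2) / c) = ennreal ?a + ennreal ?b + ennreal ?e"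
        by (simp only: ennreal_mult[OF p(1) v(1)] ennreal_mult[OF p(2) v(2)] ennreal_mult[OF p(3) v(3)])
      also have "\<dots> = ennreal (?a + ?b) + ennreal ?e" by (simp only: ennreal_plus[OF n(1) n(2)])
      also have "\<dots> = ennreal (?a + ?b + ?e)" using ennreal_plus[OF add_nonneg_nonneg[OF n(1) n(2)] n(3)] by simp
      also have "?a + ?b + ?e = (P1 d1 d2 * V (Suc d1, d2) + P2 d1 d2 * V (d1, Suc d2) + (1 - P1 d1 d2 - P2 d1 d2) * V (d1,d2)) / c"
        by (simp add: add_divide_distrib)
      finally show ?thesis .
    qed
    also have "\<dots> \<le> ennreal (V s / c)"
      unfolding s using super[of d1 d2] c by (intro ennreal_leI divide_right_mono) auto
    finally show ?thesis .
  qed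
qed

lemma hit_bound_all:
  fixes V :: "nat \<times> nat \<Rightarrow> real" and c :: real
  assumes Vnn: "\<And>s. 0 \<le> V s" and c: "0 < c"
   and super: "\<And>d1 d2. P1 d1 d2 * V (Suc d1, d2) + P2 d1 d2 * V (d1, Suc d2) + (1 - P1 d1 d2 - P2 d1 d2) * V (d1,d2) \<le> V (d1,d2)"
  shows "emeasure S {\<omega>\<in>space S. \<exists>t. c \<le> V (cnt s \<omega> t)} \<le> ennreal (V s / c)"
proof -
  let ?A = "\<lambda>n. {\<omega>\<in>space S. \<exists>t\<le>n. c \<le> V (cnt s \<omega> t)}"
  have "(\<Union>n. ?A n) = {\<omega>\<in>space S. \<exists>t. c \<le> V (cnt s \<omega> t)}" by auto
  moreover have "(SUP n. emeasure S (?A n)) = emeasure S (\<Union>n. ?A n)"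
    by (rule SUP_emeasure_incseq) (auto simp: sets_hit incseq_def intro: order_trans)
  moreover have "(SUP n. emeasure S (?A n)) \<le> ennreal (V s / c)"
    by (rule SUP_least) (rule hit_bound[OF assms])
  ultimately show ?thesis by simp
qed

end

context mkt begin

interpretation SP: prob_space S by (rule N.prob_space_stream_space)

lemma stay_bound:
  "emeasure S {\<omega>\<in>space S. \<forall>t\<le>n. cnt (d1,d2) \<omega> t = (d1,d2)} \<le> ennreal ((1 - P1 d1 d2)^n)"
proof (induction n)
  case 0
  show ?case using SP.emeasure_le_1 by simp
next
  case (Suc n)
  let ?s = "(d1,d2)"
  let ?A = "\<lambda>n. {\<omega>\<in>space S. \<forall>t\<le>n. cnt ?s \<omega> t = ?s}"
  have eq: "{x\<in>space S. y ## x \<in> ?A (Suc n)} = (if stp ?s y = ?s then ?A n else {})" for y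
  proof -
    have "(\<forall>t\<le>Suc n. cnt ?s (y##x) t = ?s) \<longleftrightarrow> stp ?s y = ?s \<and> (\<forall>t\<le>n. cnt (stp ?s y) x t = ?s)" for x
    proof
      assume a: "\<forall>t\<le>Suc n. cnt ?s (y##x) t = ?s"
      have "\<forall>t\<le>n. cnt (stp ?s y) x t = ?s"
      proof (intro allI impI)
        fix t assume "t \<le> n"
        then have "cnt ?s (y##x) (Suc t) = ?s" using a Suc_le_mono by blast
        then show "cnt (stp ?s y) x t = ?s" by (simp only: cnt_shift)
      qed
      moreover then have "stp ?s y = ?s" by (metis cnt.simps(1) le0)
      ultimately show "stp ?s y = ?s \<and> (\<forall>t\<le>n. cnt (stp ?s y) x t = ?s)" by simp
    next
      assume a: "stp ?s y = ?s \<and> (\<forall>t\<le>n. cnt (stp ?s y) x t = ?s)"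
      show "\<forall>t\<le>Suc n. cnt ?s (y##x) t = ?s"
      proof (intro allI impI)
        fix t assume t: "t \<le> Suc n"
        show "cnt ?s (y##x) t = ?s"
        proof (cases t)
          case 0 then show ?thesis by simp
        next
          case (Suc t')
          then have "t' \<le> n" using t by simp
          then show ?thesis unfolding Suc cnt_shift using a by metis
        qed
      qed
    qed
    then show ?thesis by (auto simp: space_S)
  qed
  have "emeasure S (?A (Suc n)) = (\<integral>\<^sup>+y. emeasure S (if stp ?s y = ?s then ?A n else {}) \<partial>market_noise)"
    by (subst N.emeasure_stream_space) (simp_all only: sets_stay eq)
  also have "\<dots> \<le> (\<integral>\<^sup>+y. (\<lambda>s'. if s' = ?s then ennreal ((1 - P1 d1 d2)^n) else 0) (stp ?s y) \<partial>market_noise)"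
    by (intro nn_integral_mono) (use Suc.IH in auto)
  also have "\<dots> = ennreal (1 - P1 d1 d2 - P2 d1 d2) * ennreal ((1 - P1 d1 d2)^n)"
    by (subst step_integral) simp
  also have "\<dots> \<le> ennreal ((1 - P1 d1 d2)^Suc n)"
  proof -
    have "(1 - P1 d1 d2 - P2 d1 d2) * (1 - P1 d1 d2)^n \<le> (1 - P1 d1 d2) * (1 - P1 d1 d2)^n"
      using P_bounds[of d1 d2] by (intro mult_right_mono) auto
    then show ?thesis using P_bounds[of d1 d2] by (simp add: ennreal_mult[symmetric])
  qed
  finally show ?case .
qed

lemma stay_null: "emeasure S {\<omega>\<in>space S. \<forall>t. cnt s \<omega> t = s} = 0"
proof -
  obtain d1 d2 where s: "s = (d1, d2)" by (cases s)
  let ?r = "1 - P1 d1 d2"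
  have r: "0 \<le> ?r" "?r < 1" using P_bounds[of d1 d2] by auto
  have le: "emeasure S {\<omega>\<in>space S. \<forall>t. cnt s \<omega> t = s} \<le> ennreal (?r^n)" for n
    unfolding s by (rule order_trans[OF emeasure_mono stay_bound]) (auto simp: sets_stay)
  have "(\<lambda>n. ennreal (?r^n)) \<longlonglongrightarrow> ennreal 0"
    by (rule tendsto_ennrealI) (rule LIMSEQ_realpow_zero[OF r])
  then have "emeasure S {\<omega>\<in>space S. \<forall>t. cnt s \<omega> t = s} \<le> ennreal 0"
    by (rule LIMSEQ_le_const) (use le in auto)
  then show ?thesis by simp
qed

lemma stuck_null: "emeasure S {\<omega>\<in>space S. \<forall>t\<ge>T. cnt s \<omega> t = cnt s \<omega> T} = 0"
proof (induction T arbitrary: s)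
  case 0
  then show ?case using stay_null[of s] by simp
next
  case (Suc T)
  have eq: "{x\<in>space S. y ## x \<in> {\<omega>\<in>space S. \<forall>t\<ge>Suc T. cnt s \<omega> t = cnt s \<omega> (Suc T)}}
     = {\<omega>\<in>space S. \<forall>t\<ge>T. cnt (stp s y) \<omega> t = cnt (stp s y) \<omega> T}" for y
  proof -
    have iff: "(\<forall>t\<ge>Suc T. cnt s (y##x) t = cnt s (y##x) (Suc T)) \<longleftrightarrow> (\<forall>t\<ge>T. cnt (stp s y) x t = cnt (stp s y) x T)" for x
    proof
      assume a: "\<forall>t\<ge>Suc T. cnt s (y##x) t = cnt s (y##x) (Suc T)"
      show "\<forall>t\<ge>T. cnt (stp s y) x t = cnt (stp s y) x T"
      proof (intro allI impI)
        fix t assume "T \<le> t"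
        then have "cnt s (y##x) (Suc t) = cnt s (y##x) (Suc T)" by (intro a[rule_format]) simp
        then show "cnt (stp s y) x t = cnt (stp s y) x T" by (simp only: cnt_shift)
      qed
    next
      assume a: "\<forall>t\<ge>T. cnt (stp s y) x t = cnt (stp s y) x T"
      show "\<forall>t\<ge>Suc T. cnt s (y##x) t = cnt s (y##x) (Suc T)"
      proof (intro allI impI)
        fix t assume t: "Suc T \<le> t"
        then obtain t' where tt: "t = Suc t'" by (cases t) auto
        then have "T \<le> t'" using t by simp
        then show "cnt s (y##x) t = cnt s (y##x) (Suc T)" unfolding tt cnt_shift by (rule a[rule_format])
      qed
    qed
    show ?thesis by (simp only: space_S UNIV_I mem_Collect_eq simp_thms iff)
  qed
  have "emeasure S {\<omega>\<in>space S. \<forall>t\<ge>Suc T. cnt s \<omega> t = cnt s \<omega> (Suc T)}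
      = (\<integral>\<^sup>+y. emeasure S {\<omega>\<in>space S. \<forall>t\<ge>T. cnt (stp s y) \<omega> t = cnt (stp s y) \<omega> T} \<partial>market_noise)"
    by (subst N.emeasure_stream_space) (simp_all only: sets_stuck eq)
  also have "\<dots> = 0" by (simp add: Suc.IH)
  finally show ?case .
qed

lemma AE_not_stuck: "AE \<omega> in S. \<forall>T. \<exists>t\<ge>T. cnt s \<omega> t \<noteq> cnt s \<omega> T"
proof (subst AE_all_countable, intro allI)
  fix T
  show "AE \<omega> in S. \<exists>t\<ge>T. cnt s \<omega> t \<noteq> cnt s \<omega> T"
    by (rule AE_I'[of "{\<omega>\<in>space S. \<forall>t\<ge>T. cnt s \<omega> t = cnt s \<omega> T}"])
       (auto simp: null_sets_def sets_stuck stuck_null)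
qed

lemma AE_bounded:
  fixes V :: "nat \<times> nat \<Rightarrow> real"
  assumes Vnn: "\<And>s. 0 \<le> V s"
   and super: "\<And>d1 d2. P1 d1 d2 * V (Suc d1, d2) + P2 d1 d2 * V (d1, Suc d2) + (1 - P1 d1 d2 - P2 d1 d2) * V (d1,d2) \<le> V (d1,d2)"
  shows "AE \<omega> in S. \<exists>M. \<forall>t. V (cnt s \<omega> t) < M"
proof -
  let ?N = "{\<omega>\<in>space S. \<forall>k::nat. \<exists>t. real (Suc k) \<le> V (cnt s \<omega> t)}"
  have sN: "?N \<in> sets S"
    apply (rule predE)
    apply (rule pred_intros_countable)
    apply (rule pred_intros_countable)
    apply (rule pred_cnt)
    done
  have le: "emeasure S ?N \<le> ennreal (V s / real (Suc k))" for k
  proof -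
    have sk: "{\<omega>\<in>space S. \<exists>t. real (Suc k) \<le> V (cnt s \<omega> t)} \<in> sets S"
      apply (rule predE)
      apply (rule pred_intros_countable)
      apply (rule pred_cnt)
      done
    have "?N \<subseteq> {\<omega>\<in>space S. \<exists>t. real (Suc k) \<le> V (cnt s \<omega> t)}" by blast
    then show ?thesis
      by (rule order_trans[OF emeasure_mono[OF _ sk] hit_bound_all[OF Vnn _ super]]) simp
  qed
  have "(\<lambda>k. ennreal (V s / real (Suc k))) \<longlonglongrightarrow> ennreal 0"
    by (rule tendsto_ennrealI) (intro tendsto_divide_0[OF tendsto_const] filterlim_at_top_imp_at_infinity filterlim_compose[OF filterlim_real_sequentially filterlim_Suc])
  then have "emeasure S ?N \<le> ennreal 0"
    by (rule LIMSEQ_le_const) (use le in auto)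
  then have "?N \<in> null_sets S" using sN by (simp add: null_sets_def)
  then show ?thesis
  proof (rule AE_I')
    show "{\<omega> \<in> space S. \<not> (\<exists>M. \<forall>t. V (cnt s \<omega> t) < M)} \<subseteq> ?N"
    proof clarify
      fix \<omega> k assume "\<omega> \<in> space S" "\<not> (\<exists>M. \<forall>t. V (cnt s \<omega> t) < M)"
      then show "\<exists>t. real (Suc k) \<le> V (cnt s \<omega> t)" by (meson not_less)
    qed
  qed
qed

end

lemma bern: fixes y r :: real assumes "-1 < y" "0 \<le> r" "r \<le> 1" shows "(1+y) powr r \<le> 1 + r*y"
  using Youngs_inequality_0[of r "1-r" "1+y" 1] assms by (simp add: algebra_simps)

lemma aux_div: fixes x c :: real assumes "0 < x" shows "c/(x+1) = (c/x)*(x/(x+1))"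
proof -
  have "x + 1 \<noteq> 0" "x \<noteq> 0" using assms by auto
  then show ?thesis by (simp add: field_simps)
qed

lemma aux2: fixes a w D x :: real assumes "a \<noteq> 0" "w \<noteq> 0" shows "(w*a/D)*(x/w)/a = x/D"
  using assms by (simp add: field_simps)

lemma aux3: fixes a w D r :: real assumes "a \<noteq> 0" shows "(w*a/D)*r/a = w*r/D"
  using assms by (simp add: field_simps)

context mkt begin

definition "w1 = v1*q1"
definition "w2 = v2*q2"
definition "rho = min 1 (w1*A1/(2*(w2+1)))"
definition "th = w2*rho/w1"
definition "bb = (th+rho)/2"
definition "k0 = nat \<lceil>th/(bb-th)\<rceil>"
definition "g d = (1/2::real)^(min d k0) * ((A1 + real k0)/(A1 + real (max d k0))) powr bb"
definition "V s = (A2 + real (snd s)) powr rho * g (fst s)"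

lemma w_facts: "0 < w1" "0 \<le> w2" "w2 < w1"
proof -
  have q1: "0 < q1" using q by simp
  show "0 < w1" unfolding w1_def using v q1 by simp
  show "0 \<le> w2" unfolding w2_def using v q by simp
  have "v2 * q2 \<le> v1 * q2" using v q by (intro mult_right_mono) auto
  also have "\<dots> < v1 * q1" using v q by simp
  finally show "w2 < w1" unfolding w1_def w2_def .
qed

lemma rho_facts: "0 < rho" "rho \<le> 1" "w2 * rho \<le> w1 * A1 / 2"
proof -
  show "0 < rho" unfolding rho_def using w_facts Apos by simp
  show "rho \<le> 1" unfolding rho_def by simp
  have "w2 * rho \<le> w2 * (w1*A1/(2*(w2+1)))" unfolding rho_def using w_facts by (intro mult_left_mono) auto
  also have "\<dots> = (w1*A1/2) * (w2/(w2+1))" using w_facts by (simp add: field_simps)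
  also have "\<dots> \<le> (w1*A1/2) * 1" using w_facts Apos by (intro mult_left_mono) auto
  finally show "w2 * rho \<le> w1 * A1 / 2" by simp
qed

lemma th_facts: "0 \<le> th" "th < rho" "th \<le> A1/2"
proof -
  show "0 \<le> th" unfolding th_def using w_facts rho_facts by simp
  show "th < rho" unfolding th_def using w_facts rho_facts by (simp add: divide_less_eq)
  show "th \<le> A1/2" unfolding th_def using w_facts rho_facts by (simp add: divide_le_eq mult.commute)
qed

lemma bb_facts: "th < bb" "bb < rho" "0 < bb" "bb \<le> 1"
  using th_facts rho_facts unfolding bb_def by auto

lemma k0_ge: "th/(bb-th) \<le> real k0"
  unfolding k0_def by linarith

lemma g_pos: "0 < g d"
  unfolding g_def using Apos by simp

lemma g_step: "g (Suc d) \<le> g d * (1 - th/(A1 + real d))"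
proof (cases "d < k0")
  case True
  have ad: "0 < A1 + real d" using Apos by simp
  have "th/(A1 + real d) \<le> (A1/2)/(A1 + real d)" using th_facts ad by (intro divide_right_mono) auto
  also have "\<dots> \<le> 1/2" using Apos by (simp add: divide_le_eq)
  finally have h: "th/(A1 + real d) \<le> 1/2" .
  have k: "(A1 + real k0) / (A1 + real k0) = 1" using Apos by simp
  have "g (Suc d) = (1/2)^(Suc d)" unfolding g_def using True k by (simp add: max_def min_def)
  also have "\<dots> = (1/2)^d * (1/2)" by simp
  also have "\<dots> \<le> (1/2)^d * (1 - th/(A1 + real d))" using h by (intro mult_left_mono) auto
  also have "(1/2::real)^d = g d" unfolding g_def using True k by (simp add: max_def min_def)
  finally show ?thesis .
next
  case False
  let ?a = "A1 + real d"
  have a: "0 < ?a" using Apos by simp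
  let ?h = "(1/2::real)^k0" and ?c = "A1 + real k0"
  have c: "0 < ?c" using Apos by simp
  have gd: "g d = ?h * (?c/?a) powr bb" unfolding g_def using False by (simp add: max_def min_def)
  have gs: "g (Suc d) = ?h * (?c/(?a+1)) powr bb" unfolding g_def using False by (simp add: max_def min_def add_ac)
  have a1: "0 < ?a + 1" using a by simp
  have e: "?c/(?a+1) = (?c/?a) * (?a/(?a+1))" by (rule aux_div[OF a])
  have "(?c/(?a+1)) powr bb = (?c/?a) powr bb * (?a/(?a+1)) powr bb"
  proof -
    have nn: "0 \<le> ?c/?a" "0 \<le> ?a/(?a+1)" using a c by auto
    show ?thesis by (simp only: e powr_mult)
  qed
  moreover have "(?a/(?a+1)) powr bb \<le> 1 - th/?a"
  proof -
    have "?a/(?a+1) = 1 + (-1/(?a+1))" using a by (simp add: field_simps)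
    then have "(?a/(?a+1)) powr bb \<le> 1 + bb*(-1/(?a+1))"
      using bern[of "-1/(?a+1)" bb] a bb_facts by (simp add: divide_less_eq)
    also have "\<dots> \<le> 1 - th/?a"
    proof -
      have "real k0 \<le> real d" using False by simp
      then have "th/(bb-th) \<le> ?a" using k0_ge Apos by linarith
      then have "th \<le> ?a * (bb - th)" using bb_facts by (simp add: divide_le_eq mult.commute)
      then have "th * (?a + 1) \<le> bb * ?a" by (simp add: algebra_simps)
      then have "th / ?a \<le> bb / (?a+1)" using a by (simp add: divide_le_eq le_divide_eq mult.commute)
      then show ?thesis by simp
    qed
    finally show ?thesis .
  qed
  ultimately show ?thesis unfolding gd gs using c
    by (simp add: mult.assoc mult_left_mono)
qed

lemma V_nn: "0 \<le> V s"
  unfolding V_def using g_pos[of "fst s"] by simp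

lemma P1_eq: "P1 d1 d2 = w1 * (A1 + real d1) / (v1 * (A1 + real d1) + v2 * (A2 + real d2))"
  unfolding P1_def pr_def w1_def by simp

lemma P2_eq: "P2 d1 d2 = w2 * (A2 + real d2) / (v1 * (A1 + real d1) + v2 * (A2 + real d2))"
proof -
  have "0 < v1 * (A1 + real d1) + v2 * (A2 + real d2)" using v Apos by (simp add: add_pos_pos)
  then show ?thesis unfolding P2_def pr_def w2_def by (simp add: field_simps)
qed

lemma V_super: "P1 d1 d2 * V (Suc d1, d2) + P2 d1 d2 * V (d1, Suc d2) + (1 - P1 d1 d2 - P2 d1 d2) * V (d1,d2) \<le> V (d1,d2)"
proof -
  let ?a1 = "A1 + real d1" and ?a2 = "A2 + real d2"
  let ?D = "v1 * ?a1 + v2 * ?a2"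
  have a1: "0 < ?a1" and a2: "0 < ?a2" using Apos by auto
  have D: "0 < ?D" using v Apos by (simp add: add_pos_pos)
  let ?G = "g d1"
  let ?X = "?a2 powr rho * ?G"
  have X: "0 \<le> ?X" using g_pos[of d1] by simp
  have V0: "V (d1, d2) = ?X" unfolding V_def by simp
  have V1: "V (Suc d1, d2) \<le> ?X - ?X * th / ?a1"
  proof -
    have "V (Suc d1, d2) = ?a2 powr rho * g (Suc d1)" unfolding V_def by simp
    also have "\<dots> \<le> ?a2 powr rho * (?G * (1 - th/?a1))" by (intro mult_left_mono g_step) auto
    finally show ?thesis by (simp add: algebra_simps)
  qed
  have V2: "V (d1, Suc d2) \<le> ?X + ?X * rho / ?a2"
  proof -
    have "?a2 + 1 = ?a2 * (1 + 1/?a2)" using a2 by (simp add: field_simps)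
    then have "(?a2 + 1) powr rho = ?a2 powr rho * (1 + 1/?a2) powr rho"
      using a2 by (simp add: powr_mult)
    also have "\<dots> \<le> ?a2 powr rho * (1 + rho * (1/?a2))"
    proof -
      have "-1 < 1/?a2" using a2 by (smt (verit) divide_pos_pos)
      then show ?thesis using bern[of "1/?a2" rho] rho_facts by (intro mult_left_mono) auto
    qed
    finally have "(?a2 + 1) powr rho \<le> ?a2 powr rho * (1 + rho * (1/?a2))" .
    then have "(?a2 + 1) powr rho * ?G \<le> ?a2 powr rho * (1 + rho * (1/?a2)) * ?G"
      using g_pos[of d1] by (intro mult_right_mono) auto
    then show ?thesis unfolding V_def by (simp add: algebra_simps add_ac)
  qed
  have p: "0 \<le> P1 d1 d2" "0 \<le> P2 d1 d2" "P2 d1 d2 \<le> 1 - P1 d1 d2" using P_bounds[of d1 d2] by auto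
  have "P1 d1 d2 * V (Suc d1, d2) + P2 d1 d2 * V (d1, Suc d2) + (1 - P1 d1 d2 - P2 d1 d2) * V (d1,d2)
     \<le> P1 d1 d2 * (?X - ?X * th / ?a1) + P2 d1 d2 * (?X + ?X * rho / ?a2) + (1 - P1 d1 d2 - P2 d1 d2) * ?X"
    unfolding V0 using p V1 V2 by (intro add_mono mult_left_mono) auto
  also have "\<dots> = ?X - ?X * (P1 d1 d2 * th / ?a1 - P2 d1 d2 * rho / ?a2)"
    by (simp add: algebra_simps)
  also have "P1 d1 d2 * th / ?a1 - P2 d1 d2 * rho / ?a2 = 0"
  proof -
    have nz: "?a1 \<noteq> 0" "?a2 \<noteq> 0" "?D \<noteq> 0" "w1 \<noteq> 0" using a1 a2 D w_facts by auto
    have 1: "P1 d1 d2 * th / ?a1 = w2 * rho / ?D" unfolding P1_eq th_def using nz by (intro aux2) auto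
    have 2: "P2 d1 d2 * rho / ?a2 = w2 * rho / ?D" unfolding P2_eq using nz by (intro aux3) auto
    show ?thesis unfolding 1 2 by simp
  qed
  finally show ?thesis unfolding V0 by simp
qed

end

lemma powr_inv_lt: fixes x r K :: real
  assumes r: "0 < r" and x: "0 \<le> x" and lt: "x powr r < K" shows "x < K powr (1/r)"
proof (cases "x = 0")
  case True
  then have "0 < K" using lt r by simp
  then show ?thesis using True by simp
next
  case False
  then have xp: "0 < x" using x by simp
  have "(x powr r) powr (1/r) < K powr (1/r)"
    using lt r xp by (intro powr_less_mono2) auto
  moreover have "(x powr r) powr (1/r) = x" using r xp by (simp add: powr_powr)
  ultimately show ?thesis by simp
qed

context mkt begin

lemma g_dec: "g (Suc d) \<le> g d"
proof -
  have "0 \<le> th/(A1 + real d)" using th_facts Apos by simp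
  then have "g d * (1 - th/(A1 + real d)) \<le> g d * 1" using g_pos[of d] by (intro mult_left_mono) auto
  then show ?thesis using g_step[of d] by simp
qed

lemma g_anti: "d \<le> d' \<Longrightarrow> g d' \<le> g d"
  by (rule lift_Suc_antimono_le[of g, OF g_dec])

lemma g_big: "k0 \<le> d \<Longrightarrow> g d = ((1/2)^k0 * (A1 + real k0) powr bb) / (A1 + real d) powr bb"
  unfolding g_def using Apos by (simp add: max_def min_def powr_divide)

lemma det:
  fixes c :: "nat \<Rightarrow> nat \<times> nat" and M :: real
  assumes steps: "\<And>t. c (Suc t) = (Suc (fst (c t)), snd (c t)) \<or> c (Suc t) = (fst (c t), Suc (snd (c t))) \<or> c (Suc t) = c t"
    and H1: "\<forall>T. \<exists>t\<ge>T. c t \<noteq> c T" and H2: "\<forall>t. V (c t) < M"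
  shows "(\<lambda>t. real (fst (c t)) / (real (fst (c t)) + real (snd (c t)))) \<longlonglongrightarrow> 1"
proof -
  define x where "x t = fst (c t)" for t
  define y where "y t = snd (c t)" for t
  have cxy: "c t = (x t, y t)" for t unfolding x_def y_def by simp
  have xs: "x t \<le> x (Suc t)" for t using steps[of t] unfolding x_def by auto
  have ys: "y t \<le> y (Suc t)" for t using steps[of t] unfolding y_def by auto
  have xm: "t \<le> t' \<Longrightarrow> x t \<le> x t'" for t t' by (rule lift_Suc_mono_le[of x, OF xs])
  have ym: "t \<le> t' \<Longrightarrow> y t \<le> y t'" for t t' by (rule lift_Suc_mono_le[of y, OF ys])
  have tot: "\<exists>t. k \<le> x t + y t" for k
  proof (induction k)
    case 0 then show ?case by simp
  next
    case (Suc k)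
    then obtain t where t: "k \<le> x t + y t" by blast
    obtain t' where t': "t' \<ge> t" "c t' \<noteq> c t" using H1 by blast
    have "x t \<le> x t'" "y t \<le> y t'" using xm ym t' by auto
    moreover have "x t' \<noteq> x t \<or> y t' \<noteq> y t" using t'(2) unfolding cxy by auto
    ultimately have "x t + y t < x t' + y t'" by auto
    then show ?case using t by (intro exI[of _ t']) simp
  qed
  have Mpos: "0 < M" using H2 V_nn[of "c 0"] by (metis le_less_trans)
  have xunb: "\<exists>t. m \<le> x t" for m
  proof (rule ccontr)
    assume "\<not> (\<exists>t. m \<le> x t)"
    then have xl: "x t \<le> m" for t by (meson nle_le)
    let ?K = "M / g m"
    have gm: "0 < g m" by (rule g_pos)
    have ylt: "A2 + real (y t) < ?K powr (1/rho)" for t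
    proof (rule powr_inv_lt)
      show "0 < rho" "0 \<le> A2 + real (y t)" using rho_facts Apos by auto
      have "(A2 + real (y t)) powr rho * g m \<le> (A2 + real (y t)) powr rho * g (x t)"
        using g_anti[OF xl[of t]] by (intro mult_left_mono) auto
      also have "\<dots> = V (c t)" unfolding V_def cxy by simp
      also have "\<dots> < M" using H2 by simp
      finally show "(A2 + real (y t)) powr rho < ?K" using gm by (simp add: pos_less_divide_eq)
    qed
    have "real (y t) < ?K powr (1/rho)" for t using ylt[of t] Apos by linarith
    then have yl: "y t \<le> nat \<lceil>?K powr (1/rho)\<rceil>" for t
    proof -
      have "real (y t) \<le> real (nat \<lceil>?K powr (1/rho)\<rceil>)"
        using \<open>real (y t) < ?K powr (1/rho)\<close> real_nat_ceiling_ge[of "?K powr (1/rho)"] by linarith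
      then show ?thesis by (simp only: of_nat_le_iff)
    qed
    obtain t where "m + nat \<lceil>?K powr (1/rho)\<rceil> + 1 \<le> x t + y t" using tot by blast
    then show False using xl[of t] yl[of t] by simp
  qed
  have xlim: "filterlim (\<lambda>t. real (x t)) at_top sequentially"
  proof (subst filterlim_at_top, intro allI)
    fix Z :: real
    obtain t0 where t0: "nat \<lceil>Z\<rceil> \<le> x t0" using xunb by blast
    show "eventually (\<lambda>t. Z \<le> real (x t)) sequentially"
    proof (rule eventually_sequentiallyI[of t0])
      fix t assume "t0 \<le> t"
      then have "nat \<lceil>Z\<rceil> \<le> x t" using xm t0 order_trans by blast
      then show "Z \<le> real (x t)" by linarith
    qed
  qed
  define beta where "beta = bb / rho"
  have beta: "0 < beta" "beta < 1" unfolding beta_def using bb_facts rho_facts by auto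
  define C0 where "C0 = (1/2)^k0 * (A1 + real k0) powr bb"
  have C0: "0 < C0" unfolding C0_def using Apos by simp
  define K2 where "K2 = (M / C0) powr (1/rho) * (A1 + 1) powr beta"
  have bound: "1 - real (x t) / (real (x t) + real (y t)) \<le> K2 * real (x t) powr (beta - 1)"
    if xt: "max k0 1 \<le> x t" for t
  proof -
    let ?a1 = "A1 + real (x t)" and ?a2 = "A2 + real (y t)"
    have x1: "1 \<le> real (x t)" using xt by simp
    have a1: "0 < ?a1" using Apos by simp
    have "?a2 powr rho * (C0 / ?a1 powr bb) = V (c t)"
      unfolding V_def cxy C0_def using g_big[of "x t"] xt by simp
    also have "\<dots> < M" using H2 by simp
    finally have "?a2 powr rho < M / C0 * ?a1 powr bb"
      using C0 a1 by (simp add: field_simps)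
    then have "?a2 < (M / C0 * ?a1 powr bb) powr (1/rho)"
      using rho_facts Apos by (intro powr_inv_lt) auto
    also have "\<dots> = (M / C0) powr (1/rho) * ?a1 powr beta"
    proof -
      have "(M / C0 * ?a1 powr bb) powr (1/rho) = (M / C0) powr (1/rho) * (?a1 powr bb) powr (1/rho)"
        by (simp only: powr_mult)
      also have "(?a1 powr bb) powr (1/rho) = ?a1 powr beta" unfolding beta_def by (simp add: powr_powr)
      finally show ?thesis .
    qed
    also have "\<dots> \<le> (M / C0) powr (1/rho) * ((A1 + 1) * real (x t)) powr beta"
      using x1 Apos beta by (intro mult_left_mono powr_mono2) (auto simp: algebra_simps)
    also have "\<dots> = K2 * real (x t) powr beta"
      unfolding K2_def using Apos by (simp add: powr_mult)
    finally have a2lt: "?a2 < K2 * real (x t) powr beta" .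
    have "1 - real (x t) / (real (x t) + real (y t)) = real (y t) / (real (x t) + real (y t))"
      using x1 by (simp add: field_simps)
    also have "\<dots> \<le> real (y t) / real (x t)"
      using x1 by (intro divide_left_mono) auto
    also have "\<dots> \<le> K2 * real (x t) powr beta / real (x t)"
      using a2lt Apos x1 by (intro divide_right_mono) auto
    also have "\<dots> = K2 * real (x t) powr (beta - 1)"
      using x1 by (simp add: powr_diff)
    finally show ?thesis .
  qed
  have ev: "eventually (\<lambda>t. max k0 1 \<le> x t) sequentially"
  proof -
    have "eventually (\<lambda>t. real (max k0 1) \<le> real (x t)) sequentially"
      using xlim unfolding filterlim_at_top by blast
    then show ?thesis by (simp only: of_nat_le_iff)
  qed
  have lim0: "(\<lambda>t. K2 * real (x t) powr (beta - 1)) \<longlonglongrightarrow> K2 * 0"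
    by (intro tendsto_mult tendsto_const tendsto_neg_powr xlim) (use beta in simp)
  have "(\<lambda>t. 1 - real (x t) / (real (x t) + real (y t))) \<longlonglongrightarrow> 0"
  proof (rule tendsto_sandwich[of "\<lambda>_. 0" _ _ "\<lambda>t. K2 * real (x t) powr (beta - 1)"])
    show "eventually (\<lambda>t. 0 \<le> 1 - real (x t) / (real (x t) + real (y t))) sequentially"
      by (rule always_eventually) (auto simp: divide_le_eq_1)
    show "eventually (\<lambda>t. 1 - real (x t) / (real (x t) + real (y t)) \<le> K2 * real (x t) powr (beta - 1)) sequentially"
      using ev by eventually_elim (rule bound)
  qed (use lim0 in simp_all)
  then have "(\<lambda>t. 1 - (1 - real (x t) / (real (x t) + real (y t)))) \<longlonglongrightarrow> 1 - 0"
    by (intro tendsto_diff tendsto_const)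
  then show ?thesis unfolding x_def y_def by simp
qed

end

context mkt begin

lemma cnt_steps: "cnt s \<omega> (Suc t) = (Suc (fst (cnt s \<omega> t)), snd (cnt s \<omega> t)) \<or>
   cnt s \<omega> (Suc t) = (fst (cnt s \<omega> t), Suc (snd (cnt s \<omega> t))) \<or> cnt s \<omega> (Suc t) = cnt s \<omega> t"
proof -
  obtain d1 d2 where e: "cnt s \<omega> t = (d1, d2)" by (cases "cnt s \<omega> t")
  show ?thesis unfolding cnt.simps(2) e by (simp add: stp_eq)
qed

lemma main_AE: "AE \<omega> in S. (\<lambda>t. real (fst (cnt (0,0) \<omega> t)) / (real (fst (cnt (0,0) \<omega> t)) + real (snd (cnt (0,0) \<omega> t)))) \<longlonglongrightarrow> 1"
  using AE_not_stuck[of "(0,0)"] AE_bounded[OF V_nn V_super, of "(0,0)"]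
proof eventually_elim
  case (elim \<omega>)
  then obtain M where "\<forall>t. V (cnt (0,0) \<omega> t) < M" by blast
  then show ?case by (intro det[where M=M] cnt_steps) (use elim in auto)
qed

end

theorem mainTheorem5:
  fixes v1 v2 A1 A2 q1 q2 :: real
  assumes "v1 \<ge> v2" "v2 > 0" "A1 > 0" "A2 > 0" "q1 \<le> 1" "q2 < q1" "q2 \<ge> 0"
  shows "AE \<omega> in stream_space market_noise.
           (\<lambda>t. real (fst (market_counts v1 v2 A1 A2 q1 q2 \<omega> t)) /
                 (real (fst (market_counts v1 v2 A1 A2 q1 q2 \<omega> t))
                  + real (snd (market_counts v1 v2 A1 A2 q1 q2 \<omega> t)))) \<longlonglongrightarrow> 1"
proof -
  interpret mkt v1 v2 A1 A2 q1 q2 by unfold_locales (use assms in auto)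
  show ?thesis unfolding cnt_market by (rule main_AE)
qed

end
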